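(* Let $\Bbbk$ be a field of characteristic $0$, $n\ge2$, and let $(A,\mu,\alpha)$ be a multiplicative $n$-ary totally Hom-associative algebra over $\Bbbk$. Define $(2^k(n-1)+1)$-ary products $\mu^{(k)}$ inductively by $\mu^{(0)}=\mu$ and, for $k\ge1$, with $N_{k-1}=2^{k-1}(n-1)+1$ and $N_k=2^k(n-1)+1$, $\mu^{(k)}(a_1,\ldots,a_{N_k})=\mu^{(k-1)}\big(\mu^{(k-1)}(a_1,\ldots,a_{N_{k-1}}),\alpha^{2^{k-1}}(a_{N_{k-1}+1}),\ldots,\alpha^{2^{k-1}}(a_{N_k})\big)$. Then for each $k\ge0$, $A^k=(A,\mu^{(k)},\alpha^{2^k})$ (all twisting maps equal to $\alpha^{2^k}$) is a multiplicative $(2^k(n-1)+1)$-ary totally Hom-associative algebra.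
   Context: An $m$-ary Hom-algebra $(V,\mu,(\alpha_1,\ldots,\alpha_{m-1}))$ is a vector space $V$ with an $m$-linear map $\mu$ (written $\mu(a_1,\ldots,a_m)=(a_1\cdots a_m)$) and linear maps $\alpha_i\colon V\to V$. It is multiplicative if all $\alpha_i$ equal one map $\alpha$ and $\alpha\circ\mu=\mu\circ\alpha^{\otimes m}$. It is $m$-ary totally Hom-associative if for every $i\in\{1,\ldots,m-1\}$ and all $a_1,\ldots,a_{2m-1}$: $(\alpha_1(a_1),\ldots,\alpha_{i-1}(a_{i-1}),(a_i\cdots a_{i+m-1}),\alpha_i(a_{i+m}),\ldots,\alpha_{m-1}(a_{2m-1}))=(\alpha_1(a_1),\ldots,\alpha_i(a_i),(a_{i+1}\cdots a_{i+m}),\alpha_{i+1}(a_{i+m+1}),\ldots,\alpha_{m-1}(a_{2m-1}))$. *)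

theory Defs
  imports Main "HOL.Vector_Spaces"
begin

text \<open>An m-ary operation on V is modelled as a function on lists; only its values on
lists of length m matter.  Positions are 0-based.\<close>

definition multilinear ::
  "('k::field \<Rightarrow> 'v::ab_group_add \<Rightarrow> 'v) \<Rightarrow> nat \<Rightarrow> ('v list \<Rightarrow> 'v) \<Rightarrow> bool" where
  "multilinear scale m mu \<longleftrightarrow>
     (\<forall>xs i. length xs = m \<and> i < m \<longrightarrow> Vector_Spaces.linear scale scale (\<lambda>x. mu (xs[i := x])))"

definition nary_hom_algebra ::
  "('k::field \<Rightarrow> 'v::ab_group_add \<Rightarrow> 'v) \<Rightarrow> nat \<Rightarrow> ('v list \<Rightarrow> 'v) \<Rightarrow> ('v \<Rightarrow> 'v) \<Rightarrow> bool" where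
  "nary_hom_algebra scale m mu alpha \<longleftrightarrow> multilinear scale m mu \<and> Vector_Spaces.linear scale scale alpha"

definition hom_multiplicative :: "nat \<Rightarrow> ('v list \<Rightarrow> 'v) \<Rightarrow> ('v \<Rightarrow> 'v) \<Rightarrow> bool" where
  "hom_multiplicative m mu alpha \<longleftrightarrow>
     (\<forall>xs. length xs = m \<longrightarrow> alpha (mu xs) = mu (map alpha xs))"

text \<open>Total Hom-associativity (all alpha_i equal to alpha): for the paper's index
i \<in> {1..m-1} the identity compares bracketing at 0-based position i-1 and i.\<close>
definition bracket_at :: "nat \<Rightarrow> ('v list \<Rightarrow> 'v) \<Rightarrow> ('v \<Rightarrow> 'v) \<Rightarrow> nat \<Rightarrow> 'v list \<Rightarrow> 'v" where
  "bracket_at m mu alpha j xs =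
     mu (map alpha (take j xs) @ [mu (take m (drop j xs))] @ map alpha (drop (j + m) xs))"

definition totally_hom_assoc :: "nat \<Rightarrow> ('v list \<Rightarrow> 'v) \<Rightarrow> ('v \<Rightarrow> 'v) \<Rightarrow> bool" where
  "totally_hom_assoc m mu alpha \<longleftrightarrow>
     (\<forall>i xs. 1 \<le> i \<and> i \<le> m - 1 \<and> length xs = 2 * m - 1 \<longrightarrow>
        bracket_at m mu alpha (i - 1) xs = bracket_at m mu alpha i xs)"

definition arity_k :: "nat \<Rightarrow> nat \<Rightarrow> nat" where
  "arity_k n k = 2 ^ k * (n - 1) + 1"

fun mu_k :: "nat \<Rightarrow> ('v list \<Rightarrow> 'v) \<Rightarrow> ('v \<Rightarrow> 'v) \<Rightarrow> nat \<Rightarrow> 'v list \<Rightarrow> 'v" where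
  "mu_k n mu alpha 0 xs = mu xs"
| "mu_k n mu alpha (Suc k) xs =
     mu_k n mu alpha k
       (mu_k n mu alpha k (take (arity_k n k) xs)
        # map (alpha ^^ (2 ^ k)) (drop (arity_k n k) xs))"

end

theory Submission imports Defs begin

definition mu2 :: "nat \<Rightarrow> ('v list \<Rightarrow> 'v) \<Rightarrow> ('v \<Rightarrow> 'v) \<Rightarrow> 'v list \<Rightarrow> 'v" where
  "mu2 m f a xs = f (f (take m xs) # map a (drop m xs))"

lemma bracket_split:
  "length p = j \<Longrightarrow> length b = m \<Longrightarrow>
   bracket_at m f a j (p @ b @ s) = f (map a p @ [f b] @ map a s)"
  by (simp add: bracket_at_def)

lemma F1:
  assumes T: "totally_hom_assoc m f a"
  shows "j < m \<Longrightarrow> length xs = 2*m - 1 \<Longrightarrow> bracket_at m f a j xs = mu2 m f a xs"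
proof (induction j)
  case 0
  then show ?case by (simp add: bracket_at_def mu2_def)
next
  case (Suc j)
  have "bracket_at m f a j xs = bracket_at m f a (Suc j) xs"
    using T Suc.prems unfolding totally_hom_assoc_def
    by (drule_tac x="Suc j" in spec, drule_tac x=xs in spec) simp
  with Suc show ?case by simp
qed

lemma F1':
  assumes T: "totally_hom_assoc m f a" and "length p < m" "length b = m" "length (p@b@s) = 2*m-1"
  shows "f (map a p @ [f b] @ map a s) = mu2 m f a (p@b@s)"
  using F1[OF T, of "length p" "p@b@s"] bracket_split[of p "length p" b m f a s] assms by simp

lemma split3: "length xs = x + y \<Longrightarrow> \<exists>p q. xs = p @ q \<and> length p = x \<and> length q = y"
  by (rule exI[of _ "take x xs"], rule exI[of _ "drop x xs"]) simp

lemma lemA: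
  assumes T: "totally_hom_assoc m f a" and m: "m \<ge> 2"
    and l: "length p = J" "length b1 = m" "length c = m - 1 - J" "length d = J"
       "length s = m - 1 - J" "J \<le> m - 1"
  shows "f (map (a \<circ> a) p @ [mu2 m f a (b1 @ c @ d)] @ map (a \<circ> a) s)
       = f (mu2 m f a (p @ b1 @ c) # map (a \<circ> a) (d @ s))"
proof -
  let ?Q = "map a p @ (f b1 # map a (c @ d)) @ map a s"
  have "f (map (a \<circ> a) p @ [mu2 m f a (b1 @ c @ d)] @ map (a \<circ> a) s)
      = f (map a (map a p) @ [f (f b1 # map a (c @ d))] @ map a (map a s))"
    using l by (simp add: mu2_def)
  also have "\<dots> = mu2 m f a ?Q"
    by (rule F1'[OF T]) (use l m in auto)
  also have "\<dots> = f (f (map a p @ [f b1] @ map a c) # map (a \<circ> a) (d @ s))"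
  proof -
    have e: "m - J = Suc (m - Suc J)" using l m by simp
    show ?thesis using l m by (simp add: mu2_def e)
  qed
  also have "f (map a p @ [f b1] @ map a c) = mu2 m f a (p @ b1 @ c)"
    by (rule F1'[OF T]) (use l m in auto)
  finally show ?thesis .
qed

lemma case1:
  assumes T: "totally_hom_assoc m f a" and m: "m \<ge> 2"
    and ys: "length ys = 4*m - 3" and J: "J \<le> m - 1"
  shows "bracket_at (2*m-1) (mu2 m f a) (a \<circ> a) J ys =
     f (f (mu2 m f a (take (2*m-1) ys) # map (a \<circ> a) (take (m-1) (drop (2*m-1) ys)))
        # map a (map (a \<circ> a) (drop (3*m-2) ys)))"
proof -
  obtain p r1 where 1: "ys = p @ r1" "length p = J" "length r1 = m + ((m-1-J) + (J + ((m-1-J) + (m-1))))"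
  proof -
    have "length ys = J + (m + ((m-1-J) + (J + ((m-1-J) + (m-1)))))" using ys J m by simp
    from split3[OF this] show ?thesis using that by blast
  qed
  obtain b1 r2 where 2: "r1 = b1 @ r2" "length b1 = m" "length r2 = (m-1-J) + (J + ((m-1-J) + (m-1)))"
    using split3[OF 1(3)] by blast
  obtain c r3 where 3: "r2 = c @ r3" "length c = m-1-J" "length r3 = J + ((m-1-J) + (m-1))"
    using split3[OF 2(3)] by blast
  obtain d r4 where 4: "r3 = d @ r4" "length d = J" "length r4 = (m-1-J) + (m-1)"
    using split3[OF 3(3)] by blast
  obtain s1 s2 where 5: "r4 = s1 @ s2" "length s1 = m-1-J" "length s2 = m-1"
    using split3[OF 4(3)] by blast
  have ys': "ys = p @ (b1 @ c @ d) @ (s1 @ s2)" using 1 2 3 4 5 by simp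
  have "bracket_at (2*m-1) (mu2 m f a) (a \<circ> a) J ys
      = mu2 m f a (map (a \<circ> a) p @ [mu2 m f a (b1 @ c @ d)] @ map (a \<circ> a) (s1 @ s2))"
    unfolding ys' using 1 2 3 4 5 m J by (intro bracket_split) auto
  also have "\<dots> = f (f (map (a \<circ> a) p @ [mu2 m f a (b1 @ c @ d)] @ map (a \<circ> a) s1)
                    # map a (map (a \<circ> a) s2))"
  proof -
    have e: "m - J = Suc (m - Suc J)" using J m by simp
    show ?thesis unfolding mu2_def using 1 2 3 4 5 m J by (simp add: e)
  qed
  also have "f (map (a \<circ> a) p @ [mu2 m f a (b1 @ c @ d)] @ map (a \<circ> a) s1)
     = f (mu2 m f a (p @ b1 @ c) # map (a \<circ> a) (d @ s1))"
    by (rule lemA[OF T m]) (use 1 2 3 4 5 J in auto)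
  also have "f (f (mu2 m f a (p @ b1 @ c) # map (a \<circ> a) (d @ s1)) # map a (map (a \<circ> a) s2)) =
     f (f (mu2 m f a (take (2*m-1) ys) # map (a \<circ> a) (take (m-1) (drop (2*m-1) ys)))
        # map a (map (a \<circ> a) (drop (3*m-2) ys)))"
  proof -
    have "take (2*m-1) ys = p @ b1 @ c" "take (m-1) (drop (2*m-1) ys) = d @ s1"
      "drop (3*m-2) ys = s2"
      unfolding ys' using 1(2) 2(2) 3(2) 4(2) 5(2,3) m J by simp_all
    then show ?thesis by simp
  qed
  finally show ?thesis .
qed

lemma case2:
  assumes T: "totally_hom_assoc m f a" and m: "m \<ge> 2"
    and ys: "length ys = 4*m - 3" and J: "m - 1 \<le> J" "J \<le> 2*m-2"
  shows "bracket_at (2*m-1) (mu2 m f a) (a \<circ> a) J ys =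
     f (map a (map (a \<circ> a) (take (m-1) ys)) @
        [f (mu2 m f a (take (2*m-1) (drop (m-1) ys)) # map (a \<circ> a) (drop (3*m-2) ys))])"
proof -
  define K where "K = J - (m-1)"
  have K: "K \<le> m - 1" "J = (m-1) + K" using J m unfolding K_def by auto
  obtain q r0 where 0: "ys = q @ r0" "length q = m-1" "length r0 = K + (m + ((m-1-K) + (K + (m-1-K))))"
  proof -
    have "length ys = (m-1) + (K + (m + ((m-1-K) + (K + (m-1-K)))))" using ys K m by simp
    from split3[OF this] show ?thesis using that by blast
  qed
  obtain p r1 where 1: "r0 = p @ r1" "length p = K" "length r1 = m + ((m-1-K) + (K + (m-1-K)))"
    using split3[OF 0(3)] by blast
  obtain b1 r2 where 2: "r1 = b1 @ r2" "length b1 = m" "length r2 = (m-1-K) + (K + (m-1-K))"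
    using split3[OF 1(3)] by blast
  obtain c r3 where 3: "r2 = c @ r3" "length c = m-1-K" "length r3 = K + (m-1-K)"
    using split3[OF 2(3)] by blast
  obtain d s1 where 4: "r3 = d @ s1" "length d = K" "length s1 = m-1-K"
    using split3[OF 3(3)] by blast
  have ys': "ys = (q @ p) @ (b1 @ c @ d) @ s1" using 0 1 2 3 4 by simp
  have "bracket_at (2*m-1) (mu2 m f a) (a \<circ> a) J ys
      = mu2 m f a (map (a \<circ> a) (q @ p) @ [mu2 m f a (b1 @ c @ d)] @ map (a \<circ> a) s1)"
    unfolding ys' using 0 1 2 3 4 m K by (intro bracket_split) auto
  also have "\<dots> = mu2 m f a (map (a \<circ> a) q @
       (map (a \<circ> a) p @ [mu2 m f a (b1 @ c @ d)] @ map (a \<circ> a) s1) @ [])" by simp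
  also have "\<dots> = f (map a (map (a \<circ> a) q) @
       [f (map (a \<circ> a) p @ [mu2 m f a (b1 @ c @ d)] @ map (a \<circ> a) s1)] @ map a [])"
    by (rule F1'[OF T, symmetric]) (use 0(2) 1(2) 2(2) 3(2) 4(2,3) m K(1) in auto)
  also have "f (map (a \<circ> a) p @ [mu2 m f a (b1 @ c @ d)] @ map (a \<circ> a) s1)
     = f (mu2 m f a (p @ b1 @ c) # map (a \<circ> a) (d @ s1))"
    by (rule lemA[OF T m]) (use 1(2) 2(2) 3(2) 4(2,3) K(1) in auto)
  also have "f (map a (map (a \<circ> a) q) @ [f (mu2 m f a (p @ b1 @ c) # map (a \<circ> a) (d @ s1))] @ map a []) =
     f (map a (map (a \<circ> a) (take (m-1) ys)) @
        [f (mu2 m f a (take (2*m-1) (drop (m-1) ys)) # map (a \<circ> a) (drop (3*m-2) ys))])"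
  proof -
    have "take (m-1) ys = q" "take (2*m-1) (drop (m-1) ys) = p @ b1 @ c"
      "drop (3*m-2) ys = d @ s1"
      unfolding ys' using 0(2) 1(2) 2(2) 3(2) 4(2,3) m K(1) by simp_all
    then show ?thesis by simp
  qed
  finally show ?thesis .
qed

lemma assoc2:
  fixes f :: "'v list \<Rightarrow> 'v"
  assumes T: "totally_hom_assoc m f a" and m: "m \<ge> 2"
  shows "totally_hom_assoc (2*m-1) (mu2 m f a) (a \<circ> a)"
  unfolding totally_hom_assoc_def
proof (intro allI impI)
  fix i and ys :: "'v list" assume H: "1 \<le> i \<and> i \<le> 2 * m - 1 - 1 \<and> length ys = 2 * (2 * m - 1) - 1"
  have ys: "length ys = 4*m-3" using H m by simp
  have eq: "bracket_at (2*m-1) (mu2 m f a) (a \<circ> a) J ys = bracket_at (2*m-1) (mu2 m f a) (a \<circ> a) 0 ys"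
    if "J \<le> 2*m-2" for J
  proof (cases "J \<le> m - 1")
    case True
    then show ?thesis using case1[OF T m ys True] case1[OF T m ys, of 0] by simp
  next
    case False
    then show ?thesis using case2[OF T m ys _ that] case2[OF T m ys, of "m-1"]
      case1[OF T m ys, of "m-1"] case1[OF T m ys, of 0] by simp
  qed
  show "bracket_at (2*m-1) (mu2 m f a) (a \<circ> a) (i - 1) ys = bracket_at (2*m-1) (mu2 m f a) (a \<circ> a) i ys"
  proof -
    have "i - 1 \<le> 2*m-2" "i \<le> 2*m-2" using H by auto
    then show ?thesis using eq[of "i-1"] eq[of i] by simp
  qed
qed

lemma mult2:
  fixes f :: "'v list \<Rightarrow> 'v"
  assumes M: "hom_multiplicative m f a" and m: "m \<ge> 1"
  shows "hom_multiplicative (2*m-1) (mu2 m f a) (a \<circ> a)"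
  unfolding hom_multiplicative_def
proof (intro allI impI)
  fix xs :: "'v list" assume l: "length xs = 2*m-1"
  have 1: "a (mu2 m f a ys) = mu2 m f a (map a ys)" if ly: "length ys = 2*m-1" for ys
  proof -
    have "a (mu2 m f a ys) = f (map a (f (take m ys) # map a (drop m ys)))"
      unfolding mu2_def using M ly m unfolding hom_multiplicative_def by simp
    also have "\<dots> = f (f (map a (take m ys)) # map a (map a (drop m ys)))"
      using M ly m unfolding hom_multiplicative_def by simp
    also have "\<dots> = mu2 m f a (map a ys)" unfolding mu2_def by (simp add: take_map drop_map)
    finally show ?thesis .
  qed
  show "(a \<circ> a) (mu2 m f a xs) = mu2 m f a (map (a \<circ> a) xs)"
    using 1[OF l] 1[of "map a xs"] l by (simp add: map_map[symmetric] del: map_map)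
qed

lemma lin2:
  fixes f :: "'v::ab_group_add list \<Rightarrow> 'v" and scale :: "'k::field \<Rightarrow> 'v \<Rightarrow> 'v"
  assumes N: "nary_hom_algebra scale m f a" and m: "m \<ge> 1"
  shows "nary_hom_algebra scale (2*m-1) (mu2 m f a) (a \<circ> a)"
proof -
  have la: "Vector_Spaces.linear scale scale a" and ml: "multilinear scale m f"
    using N unfolding nary_hom_algebra_def by auto
  have ml': "\<And>ys j. length ys = m \<Longrightarrow> j < m \<Longrightarrow> Vector_Spaces.linear scale scale (\<lambda>x. f (ys[j:=x]))"
    using ml unfolding multilinear_def by blast
  have "multilinear scale (2*m-1) (mu2 m f a)"
    unfolding multilinear_def
  proof (intro allI impI)
    fix xs :: "'v list" and i assume H: "length xs = 2 * m - 1 \<and> i < 2 * m - 1"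
    let ?L = "f (take m xs) # map a (drop m xs)"
    have lL: "length ?L = m" using H m by simp
    show "Vector_Spaces.linear scale scale (\<lambda>x. mu2 m f a (xs[i := x]))"
    proof (cases "i < m")
      case True
      have eq: "(\<lambda>x. mu2 m f a (xs[i := x])) = (\<lambda>y. f (?L[0:=y])) \<circ> (\<lambda>x. f ((take m xs)[i:=x]))"
        using True by (auto simp: mu2_def take_update_swap)
      have l1: "Vector_Spaces.linear scale scale (\<lambda>x. f ((take m xs)[i:=x]))"
        by (rule ml') (use True H in auto)
      have l2: "Vector_Spaces.linear scale scale (\<lambda>y. f (?L[0:=y]))"
        by (rule ml'[OF lL]) (use m in auto)
      show ?thesis unfolding eq by (rule Vector_Spaces.linear_compose[OF l1 l2])
    next
      case False
      have eq: "(\<lambda>x. mu2 m f a (xs[i := x])) = (\<lambda>y. f (?L[Suc (i-m):=y])) \<circ> a"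
        using False by (auto simp: mu2_def drop_update_swap map_update)
      have l2: "Vector_Spaces.linear scale scale (\<lambda>y. f (?L[Suc (i-m):=y]))"
        by (rule ml'[OF lL]) (use m H False in auto)
      show ?thesis unfolding eq by (rule Vector_Spaces.linear_compose[OF la l2])
    qed
  qed
  moreover have "Vector_Spaces.linear scale scale (a \<circ> a)"
    by (rule Vector_Spaces.linear_compose[OF la la])
  ultimately show ?thesis unfolding nary_hom_algebra_def by simp
qed

theorem corollary3p2:
  fixes scale :: "'k::field_char_0 \<Rightarrow> 'v::ab_group_add \<Rightarrow> 'v"
    and mu :: "'v list \<Rightarrow> 'v" and alpha :: "'v \<Rightarrow> 'v" and n :: nat
  assumes "vector_space scale"
    and "n \<ge> 2"
    and "nary_hom_algebra scale n mu alpha"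
    and "hom_multiplicative n mu alpha"
    and "totally_hom_assoc n mu alpha"
  shows "\<forall>k. nary_hom_algebra scale (arity_k n k) (mu_k n mu alpha k) (alpha ^^ (2 ^ k))
          \<and> hom_multiplicative (arity_k n k) (mu_k n mu alpha k) (alpha ^^ (2 ^ k))
          \<and> totally_hom_assoc (arity_k n k) (mu_k n mu alpha k) (alpha ^^ (2 ^ k))"
proof
  fix k
  show "nary_hom_algebra scale (arity_k n k) (mu_k n mu alpha k) (alpha ^^ (2 ^ k))
          \<and> hom_multiplicative (arity_k n k) (mu_k n mu alpha k) (alpha ^^ (2 ^ k))
          \<and> totally_hom_assoc (arity_k n k) (mu_k n mu alpha k) (alpha ^^ (2 ^ k))"
  proof (induction k)
    case 0
    have "mu_k n mu alpha 0 = mu" by (rule ext) simp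
    moreover have "arity_k n 0 = n" using assms(2) by (simp add: arity_k_def)
    ultimately show ?case using assms by simp
  next
    case (Suc k)
    have ar: "arity_k n k \<ge> 2"
    proof -
      have "2 ^ k * (n - 1) \<ge> 1" using assms(2) by simp
      then show ?thesis unfolding arity_k_def by simp
    qed
    have ar2: "arity_k n (Suc k) = 2 * arity_k n k - 1" unfolding arity_k_def by simp
    have mu: "mu_k n mu alpha (Suc k) = mu2 (arity_k n k) (mu_k n mu alpha k) (alpha ^^ (2 ^ k))"
      by (rule ext) (simp add: mu2_def)
    have al: "alpha ^^ (2 ^ Suc k) = (alpha ^^ (2 ^ k)) \<circ> (alpha ^^ (2 ^ k))"
      by (simp add: funpow_add[symmetric] mult_2)
    have m1: "arity_k n k \<ge> 1" using ar by simp
    have A: "nary_hom_algebra scale (2 * arity_k n k - 1) (mu2 (arity_k n k) (mu_k n mu alpha k) (alpha ^^ (2 ^ k))) ((alpha ^^ (2 ^ k)) \<circ> (alpha ^^ (2 ^ k)))"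
      by (rule lin2) (use Suc.IH m1 in blast)+
    have B: "hom_multiplicative (2 * arity_k n k - 1) (mu2 (arity_k n k) (mu_k n mu alpha k) (alpha ^^ (2 ^ k))) ((alpha ^^ (2 ^ k)) \<circ> (alpha ^^ (2 ^ k)))"
      by (rule mult2) (use Suc.IH m1 in blast)+
    have C: "totally_hom_assoc (2 * arity_k n k - 1) (mu2 (arity_k n k) (mu_k n mu alpha k) (alpha ^^ (2 ^ k))) ((alpha ^^ (2 ^ k)) \<circ> (alpha ^^ (2 ^ k)))"
      by (rule assoc2) (use Suc.IH ar in blast)+
    show ?case unfolding ar2 mu al using A B C by blast
  qed
qed

end
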